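(* For every positive integer $n$, $$\sum_{j=1}^{n}\csc^6\left(\frac{\pi(2j-1)}{4n}\right) = \frac{8n^2(8n^4+5n^2+2)}{15}.$$ *)

theory Defs
  imports Complex_Main
begin

end

theory Submission
  imports Defs "HOL-Computational_Algebra.Polynomial"
begin

lemma re_i_pow: "Re (\<i> ^ k) = (if even k then (-1) ^ (k div 2) else 0)"
proof (cases "even k")
  case True then obtain m where "k = 2*m" by blast
  then show ?thesis by (simp add: power_mult)
next
  case False then obtain m where "k = 2*m+1" using oddE by blast
  then show ?thesis by (simp add: power_mult)
qed

lemma re_expand:
  fixes t :: real
  shows "Re ((1 + \<i> * complex_of_real t) ^ (2*n)) = (\<Sum>k<Suc n. (-1)^k * real (2*n choose (2*k)) * t^(2*k))"
proof -
  define g where "g k = real (2*n choose k) * t^k * Re (\<i> ^ k)" for k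
  have "(1 + \<i> * complex_of_real t) ^ (2*n) = (\<i> * complex_of_real t + 1) ^ (2*n)" by (simp add: add.commute)
  also have "\<dots> = (\<Sum>k\<le>2*n. of_nat (2*n choose k) * (\<i> * complex_of_real t)^k * 1^(2*n-k))"
    by (rule binomial_ring)
  finally have "Re ((1 + \<i> * complex_of_real t) ^ (2*n)) = (\<Sum>k\<le>2*n. g k)"
    by (simp add: g_def Re_sum power_mult_distrib mult_ac)
  also have "\<dots> = (\<Sum>k<2*Suc n. g k)"
  proof -
    have "{..<2*Suc n} = insert (2*n+1) {..2*n}" by auto
    moreover have "g (2*n+1) = 0" by (simp add: g_def)
    ultimately show ?thesis by simp
  qed
  also have "\<dots> = (\<Sum>k<2*Suc n. if even k then g k else 0)"
    by (intro sum.cong) (auto simp: g_def re_i_pow)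
  also have "\<dots> = (\<Sum>k<Suc n. g (2*k))" using sum_split_even_odd[of g "\<lambda>_. 0"] by simp
  also have "\<dots> = (\<Sum>k<Suc n. (-1)^k * real (2*n choose (2*k)) * t^(2*k))"
    by (intro sum.cong) (auto simp: g_def re_i_pow)
  finally show ?thesis .
qed

lemma newton3:
  fixes a :: "'b \<Rightarrow> real"
  assumes "finite S"
  defines "E \<equiv> \<lambda>k. coeff (\<Prod>j\<in>S. [:1, a j:]) k"
  shows "E 0 = 1 \<and> (\<Sum>j\<in>S. a j) = E 1 \<and> (\<Sum>j\<in>S. a j ^ 2) = E 1 ^ 2 - 2 * E 2
     \<and> (\<Sum>j\<in>S. a j ^ 3) = E 1 ^ 3 - 3 * E 1 * E 2 + 3 * E 3"
  unfolding E_def using assms(1)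
proof (induction S rule: finite_induct)
  case empty
  then show ?case by simp
next
  case (insert x F)
  have c: "coeff ([:1, b:] * p) (Suc k) = coeff p (Suc k) + b * coeff p k" for b :: real and p k
    by (simp add: mult_pCons_left)
  have c0: "coeff ([:1, b:] * p) 0 = coeff p 0" for b :: real and p
    by (simp add: mult_pCons_left)
  show ?case using insert
    by (simp add: c c0 numeral_2_eq_2 numeral_3_eq_3 power2_eq_square power3_eq_cube) (simp add: algebra_simps)
qed

lemma b2: "real (2*n choose 2) = real n * (2*real n - 1)"
  by (simp add: binomial_gbinomial gbinomial_altdef_of_nat numeral_eq_Suc field_simps)
lemma b4: "real (2*n choose 4) = 2*real n*(2*real n-1)*(2*real n-2)*(2*real n-3)/24"
  by (simp add: binomial_gbinomial gbinomial_altdef_of_nat numeral_eq_Suc field_simps)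
lemma b6: "real (2*n choose 6) = 2*real n*(2*real n-1)*(2*real n-2)*(2*real n-3)*(2*real n-4)*(2*real n-5)/720"
  by (simp add: binomial_gbinomial gbinomial_altdef_of_nat numeral_eq_Suc field_simps)
lemma fin: fixes n e1 e2 e3 :: real
  assumes "e1 = n * (2*n - 1)" "e2 = 2*n*(2*n-1)*(2*n-2)*(2*n-3)/24"
   "e3 = 2*n*(2*n-1)*(2*n-2)*(2*n-3)*(2*n-4)*(2*n-5)/720"
  shows "n + 3*e1 + 3*(e1^2 - 2*e2) + (e1^3 - 3*e1*e2 + 3*e3) = 8 * n^2 * (8 * n^4 + 5 * n^2 + 2) / 15"
  unfolding assms by (simp add: field_simps power2_eq_square power3_eq_cube) (simp add: algebra_simps eval_nat_numeral)
lemma troot: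
  fixes x :: real and m :: nat
  assumes cp: "cos x > 0" and c0: "cos (real (2*m) * x) = 0"
  shows "(\<Sum>k<Suc m. real (2*m choose (2*k)) * (- (tan x ^ 2))^k) = 0"
proof -
  let ?t = "tan x"
  let ?z = "1 + \<i> * complex_of_real ?t"
  have "(\<Sum>k<Suc m. real (2*m choose (2*k)) * (- (tan x ^ 2))^k) = (\<Sum>k<Suc m. (-1)^k * real (2*m choose (2*k)) * ?t^(2*k))"
  proof (rule sum.cong[OF refl])
    fix k
    have a1: "(- (?t ^ 2))^k = (-1)^k * ?t ^ (2*k)" by (metis power_minus power_mult)
    show "real (2*m choose (2*k)) * (- (tan x ^ 2))^k = (-1)^k * real (2*m choose (2*k)) * ?t^(2*k)"
      unfolding a1 by (simp only: mult_ac)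
  qed
  also have "\<dots> = Re (?z ^ (2*m))" by (rule re_expand[symmetric])
  finally have e: "(\<Sum>k<Suc m. real (2*m choose (2*k)) * (- (tan x ^ 2))^k) = Re (?z ^ (2*m))" .
  have h: "cis x = complex_of_real (cos x) * ?z"
    using cp by (simp add: cis.ctr tan_def complex_eq_iff)
  have "cis x ^ (2*m) = complex_of_real (cos x) ^ (2*m) * ?z ^ (2*m)"
    unfolding h by (rule power_mult_distrib)
  also have "\<dots> = complex_of_real (cos x ^ (2*m)) * ?z ^ (2*m)" by simp
  finally have h2: "cis x ^ (2*m) = complex_of_real (cos x ^ (2*m)) * ?z ^ (2*m)" .
  have "cos (real (2*m) * x) = Re (cis x ^ (2*m))" by (simp only: DeMoivre cis.sel)
  also have "\<dots> = cos x ^ (2*m) * Re (?z ^ (2*m))" unfolding h2 by simp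
  finally have "cos x ^ (2*m) * Re (?z ^ (2*m)) = 0" using c0 by simp
  moreover have "cos x ^ (2*m) \<noteq> 0" using cp by simp
  ultimately have "Re (?z ^ (2*m)) = 0" by (metis mult_eq_0_iff)
  then show ?thesis using e by (simp only:)
qed
theorem mainTheorem16:
  fixes n :: nat
  assumes "n \<ge> 1"
  shows "(\<Sum>j=1..n. 1 / (sin (pi * (2 * real j - 1) / (4 * real n))) ^ 6)
           = 8 * (real n)^2 * (8 * (real n)^4 + 5 * (real n)^2 + 2) / 15"
proof -
  define S where "S = {1..n}"
  define th where "th j = pi * (2 * real j - 1) / (4 * real n)" for j :: nat
  define c where "c j = (cos (th j) / sin (th j))^2" for j
  define y where "y j = (tan (th j))^2" for j
  have fS: "finite S" and cS: "card S = n" by (auto simp: S_def)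
  have npos: "real n > 0" using assms by simp
  have thr: "0 < th j \<and> th j < pi/2" if "j \<in> S" for j
  proof -
    have "1 \<le> real j" "real j \<le> real n" using that by (auto simp: S_def)
    then have "0 < 2 * real j - 1" "2 * real j - 1 < 2 * real n" by auto
    moreover have "pi * (2 * real j - 1) < pi * (2 * real n)"
      using \<open>2 * real j - 1 < 2 * real n\<close> pi_gt_zero by (intro mult_strict_left_mono) auto
    ultimately show ?thesis using npos pi_gt_zero
      by (auto simp: th_def field_simps)
  qed
  have sinpos: "sin (th j) > 0" if "j \<in> S" for j
    using thr[OF that] by (intro sin_gt_zero) auto
  have cospos: "cos (th j) > 0" if "j \<in> S" for j
    using thr[OF that] by (intro cos_gt_zero_pi) auto
  have cy: "c j * y j = 1" if "j \<in> S" for j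
  proof -
    have "sin (th j) \<noteq> 0" "cos (th j) \<noteq> 0" using sinpos[OF that] cospos[OF that] by auto
    then show ?thesis by (simp add: c_def y_def tan_def power_divide)
  qed
  have ypos: "y j > 0" if "j \<in> S" for j
  proof -
    have "tan (th j) > 0" using thr[OF that] by (intro tan_gt_zero) auto
    then show ?thesis by (simp add: y_def)
  qed
  have cos0: "cos (real (2*n) * th j) = 0" if "j \<in> S" for j
  proof -
    have j1: "real (j - 1) = real j - 1" using that by (simp add: S_def of_nat_diff)
    have "real (2*n) * th j = pi * (2 * real j - 1) / 2"
      using npos by (simp add: th_def)
    also have "\<dots> = real (j - 1) * pi + pi/2" unfolding j1 by (simp add: field_simps)
    finally have "real (2*n) * th j = real (j - 1) * pi + pi/2" .
    then show ?thesis by (simp add: cos_add)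
  qed
  define T :: "real poly" where "T = (\<Sum>k<Suc n. monom (real (2*n choose (2*k))) k)"
  define Q where "Q = (\<Prod>j\<in>S. [:1, c j:])"
  have polyT: "poly T x = (\<Sum>k<Suc n. real (2*n choose (2*k)) * x^k)" for x
    by (simp add: T_def poly_sum poly_monom)
  have Troot: "poly T (- y j) = 0" if "j \<in> S" for j
  proof -
    have "poly T (- y j) = (\<Sum>k<Suc n. real (2*n choose (2*k)) * (- (tan (th j) ^ 2))^k)"
      unfolding polyT y_def by (rule refl)
    also have "\<dots> = 0" by (rule troot[OF cospos[OF that] cos0[OF that]])
    finally show ?thesis .
  qed
  have Qroot: "poly Q (- y j) = 0" if "j \<in> S" for j
  proof -
    have "poly Q (- y j) = (\<Prod>i\<in>S. 1 - c i * y j)" by (simp add: Q_def poly_prod mult.commute)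
    also have "\<dots> = 0" using fS that cy[OF that] by (intro prod_zero) auto
    finally show ?thesis .
  qed
  have degT: "degree T \<le> n" unfolding T_def
    by (intro degree_sum_le) (auto intro: order.trans[OF degree_monom_le])
  have degQ: "degree Q \<le> n"
  proof -
    have "degree Q \<le> sum (degree \<circ> (\<lambda>j. [:1, c j:])) S" unfolding Q_def by (rule degree_prod_sum_le[OF fS])
    also have "\<dots> \<le> sum (\<lambda>_. 1) S" by (intro sum_mono) auto
    finally show ?thesis using cS by simp
  qed
  have inj: "inj_on (\<lambda>j. - y j) S"
  proof (rule inj_onI)
    fix i j assume ij: "i \<in> S" "j \<in> S" "- y i = - y j"
    show "i = j"
    proof (rule ccontr)
      assume "i \<noteq> j"
      then consider "i < j" | "j < i" by linarith
      then show False
      proof cases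
        case 1
        have "pi * (2 * real i - 1) < pi * (2 * real j - 1)" using 1 pi_gt_zero by (intro mult_strict_left_mono) auto
        then have "th i < th j" using npos unfolding th_def by (intro divide_strict_right_mono) auto
        then have "tan (th i) < tan (th j)" using thr[OF ij(1)] thr[OF ij(2)] by (intro tan_monotone) auto
        moreover have "tan (th i) > 0" using thr[OF ij(1)] by (intro tan_gt_zero) auto
        ultimately have "y i < y j" unfolding y_def by (intro power_strict_mono) auto
        then show False using ij by simp
      next
        case 2
        have "pi * (2 * real j - 1) < pi * (2 * real i - 1)" using 2 pi_gt_zero by (intro mult_strict_left_mono) auto
        then have "th j < th i" using npos unfolding th_def by (intro divide_strict_right_mono) auto
        then have "tan (th j) < tan (th i)" using thr[OF ij(1)] thr[OF ij(2)] by (intro tan_monotone) auto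
        moreover have "tan (th j) > 0" using thr[OF ij(2)] by (intro tan_gt_zero) auto
        ultimately have "y j < y i" unfolding y_def by (intro power_strict_mono) auto
        then show False using ij by simp
      qed
    qed
  qed
  define A where "A = insert 0 ((\<lambda>j. - y j) ` S)"
  have cardA: "card A = Suc n"
  proof -
    have "0 \<notin> (\<lambda>j. - y j) ` S" using ypos by force
    then show ?thesis unfolding A_def using fS inj cS by (simp add: card_image)
  qed
  have TQ: "T = Q"
  proof (rule poly_eqI_degree[of A])
    fix x assume "x \<in> A"
    then show "poly T x = poly Q x"
    proof (cases "x = 0")
      case True
      have "poly T 0 = 1" unfolding polyT sum.lessThan_Suc_shift by simp
      moreover have "poly Q 0 = 1" by (simp add: Q_def poly_prod)
      ultimately show ?thesis using True by simp
    next
      case False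
      then obtain j where "j \<in> S" "x = - y j" using \<open>x \<in> A\<close> unfolding A_def by auto
      then show ?thesis using Troot Qroot by simp
    qed
  qed (use cardA degT degQ in auto)
  have coeffT: "coeff T k = real (2*n choose (2*k))" for k
    by (auto simp: T_def coeff_sum coeff_monom)
  define E where "E k = coeff Q k" for k
  have N: "(\<Sum>j\<in>S. c j) = E 1 \<and> (\<Sum>j\<in>S. c j ^ 2) = E 1 ^ 2 - 2 * E 2
     \<and> (\<Sum>j\<in>S. c j ^ 3) = E 1 ^ 3 - 3 * E 1 * E 2 + 3 * E 3"
    using newton3[OF fS, of c] unfolding E_def Q_def by simp
  have E1: "E 1 = real n * (2*real n - 1)" using coeffT[of 1] b2 TQ by (simp add: E_def)
  have E2: "E 2 = 2*real n*(2*real n-1)*(2*real n-2)*(2*real n-3)/24" using coeffT[of 2] b4[of n] TQ by (simp add: E_def)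
  have E3: "E 3 = 2*real n*(2*real n-1)*(2*real n-2)*(2*real n-3)*(2*real n-4)*(2*real n-5)/720"
    using coeffT[of 3] b6[of n] TQ by (simp add: E_def)
  have "(\<Sum>j=1..n. 1 / (sin (pi * (2 * real j - 1) / (4 * real n))) ^ 6) = (\<Sum>j\<in>S. (1 + c j)^3)"
  proof (rule sum.cong)
    fix j assume j: "j \<in> S"
    then have sp: "sin (th j) > 0" using sinpos by auto
    have "1 + c j = 1 / sin (th j) ^ 2"
    proof -
      have "1 + c j = sin (th j) ^ 2 / sin (th j) ^ 2 + cos (th j) ^ 2 / sin (th j) ^ 2"
        using sp by (simp add: c_def power_divide)
      also have "\<dots> = (sin (th j) ^ 2 + cos (th j) ^ 2) / sin (th j) ^ 2"
        by (rule add_divide_distrib[symmetric])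
      finally have "1 + c j = (sin (th j) ^ 2 + cos (th j) ^ 2) / sin (th j) ^ 2" .
      then show ?thesis by simp
    qed
    then show "1 / (sin (pi * (2 * real j - 1) / (4 * real n))) ^ 6 = (1 + c j)^3"
      by (simp add: th_def power_divide flip: power_mult)
  qed (simp add: S_def)
  also have "\<dots> = (\<Sum>j\<in>S. 1 + 3 * c j + 3 * c j ^ 2 + c j ^ 3)"
    by (intro sum.cong) (auto simp: power3_eq_cube power2_eq_square algebra_simps)
  also have "\<dots> = real n + 3 * (\<Sum>j\<in>S. c j) + 3 * (\<Sum>j\<in>S. c j ^ 2) + (\<Sum>j\<in>S. c j ^ 3)"
    by (simp add: sum.distrib sum_distrib_left cS)
  also have "\<dots> = 8 * (real n)^2 * (8 * (real n)^4 + 5 * (real n)^2 + 2) / 15"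
    using N by (simp only:) (rule fin[OF E1 E2 E3])
  finally show ?thesis .
qed

end
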